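(* Let $\gamma>0$. For each $n\in\mathbb{N}$ and $j=0,\dots,n$ let $a(n,j)\in(0,1)$ and $b(n,j)>0$, and suppose $$\lim_{n\to\infty}\frac{\log b(n,j)}{\log a(n,j)}=\gamma$$ uniformly in $j$ (i.e. for every $\varepsilon>0$ there is $n_0$ with $|\log b(n,j)/\log a(n,j)-\gamma|<\varepsilon$ for all $n\ge n_0$ and all $j=0,\dots,n$). Define $A_k(n)=\prod_{j=k}^n a(n,j)$ and $B_k(n)=\prod_{j=k}^n b(n,j)$. Then $\lim_{n\to\infty}\big(A_k(n)^\gamma-B_k(n)\big)=0$ uniformly in $k\in\{0,\dots,n\}$. *)

theory Defs
  imports Complex_Main
begin

definition Aprod :: "(nat \<Rightarrow> nat \<Rightarrow> real) \<Rightarrow> nat \<Rightarrow> nat \<Rightarrow> real" where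
  "Aprod a k n = (\<Prod>j=k..n. a n j)"

end

theory Submission
  imports Defs
begin

lemma exp_diff_bound: fixes u v :: real shows "\<bar>exp u - exp v\<bar> \<le> \<bar>u - v\<bar> * exp (max u v)"
proof -
  have key: "exp u - exp v \<le> (u - v) * exp u" if "v \<le> u" for u v :: real
  proof -
    have "1 + (v - u) \<le> exp (v - u)" by (rule exp_ge_add_one_self)
    hence "exp u * (1 + (v - u)) \<le> exp u * exp (v - u)" by simp
    thus ?thesis by (simp add: exp_diff algebra_simps)
  qed
  show ?thesis
  proof (cases "v \<le> u")
    case True
    thus ?thesis using key[OF True] by (simp add: max_def)
  next
    case False
    thus ?thesis using key[of u v] by (simp add: max_def abs_minus_commute)
  qed
qed

lemma t_exp_bound:
  fixes g t :: real
  assumes "g > 0" "t \<ge> 0"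
  shows "t * exp (- (g/2) * t) \<le> 2 / g"
proof -
  have "1 + g/2*t \<le> exp (g/2*t)" by (rule exp_ge_add_one_self)
  hence "g/2*t \<le> exp (g/2*t)" by linarith
  hence "2/g * (g/2*t) \<le> 2/g * exp (g/2*t)" using assms by (intro mult_left_mono) auto
  hence "t \<le> 2/g * exp (g/2*t)" using assms by simp
  hence "t * exp (- (g/2) * t) \<le> 2/g * exp (g/2*t) * exp (- (g/2) * t)"
    by (intro mult_right_mono) auto
  also have "\<dots> = 2/g" by (simp add: mult.assoc flip: exp_add)
  finally show ?thesis .
qed

theorem mainTheorem17:
  fixes a b :: "nat \<Rightarrow> nat \<Rightarrow> real" and \<gamma> :: real
  assumes "\<gamma> > 0"
    and "\<And>n j. j \<le> n \<Longrightarrow> 0 < a n j \<and> a n j < 1"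
    and "\<And>n j. j \<le> n \<Longrightarrow> 0 < b n j"
    and "\<forall>\<epsilon>>0. \<exists>n0. \<forall>n\<ge>n0. \<forall>j\<le>n.
           \<bar>ln (b n j) / ln (a n j) - \<gamma>\<bar> < \<epsilon>"
  shows "\<forall>\<epsilon>>0. \<exists>n0. \<forall>n\<ge>n0. \<forall>k\<le>n.
           \<bar>(Aprod a k n) powr \<gamma> - Aprod b k n\<bar> < \<epsilon>"
proof (intro allI impI)
  fix \<epsilon> :: real assume ep: "\<epsilon> > 0"
  define \<delta> where "\<delta> = min (\<gamma>/2) (\<epsilon> * \<gamma> / 4)"
  have dpos: "\<delta> > 0" using ep assms(1) by (simp add: \<delta>_def)
  obtain n0 where n0: "\<forall>n\<ge>n0. \<forall>j\<le>n. \<bar>ln (b n j) / ln (a n j) - \<gamma>\<bar> < \<delta>"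
    using assms(4) dpos by blast
  show "\<exists>n0. \<forall>n\<ge>n0. \<forall>k\<le>n. \<bar>(Aprod a k n) powr \<gamma> - Aprod b k n\<bar> < \<epsilon>"
  proof (intro exI allI impI)
    fix n k assume nn: "n0 \<le> n" and kn: "k \<le> n"
    define t where "t = - (\<Sum>j=k..n. ln (a n j))"
    define y where "y = (\<Sum>j=k..n. ln (b n j))"
    have apos: "\<And>j. j \<in> {k..n} \<Longrightarrow> 0 < a n j \<and> a n j < 1" using assms(2) by auto
    have bpos: "\<And>j. j \<in> {k..n} \<Longrightarrow> 0 < b n j" using assms(3) by auto
    have lnaneg: "\<And>j. j \<in> {k..n} \<Longrightarrow> ln (a n j) < 0" using apos by simp
    have t0: "t \<ge> 0" unfolding t_def using lnaneg
      by (smt (verit) sum_nonpos)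
    have Apos: "Aprod a k n > 0" unfolding Aprod_def using apos by (intro prod_pos) auto
    have Bpos: "Aprod b k n > 0" unfolding Aprod_def using bpos by (intro prod_pos) auto
    have lnA: "ln (Aprod a k n) = - t" unfolding Aprod_def t_def
      using apos ln_prod[of "{k..n}" "a n"] by force
    have lnB: "ln (Aprod b k n) = y" unfolding Aprod_def y_def
      using bpos by (intro ln_prod) force+
    have Ag: "(Aprod a k n) powr \<gamma> = exp (- \<gamma> * t)"
      using Apos lnA by (simp add: powr_def)
    have Bg: "Aprod b k n = exp y" using Bpos lnB by (metis exp_ln)
    have each: "\<bar>ln (b n j) + \<gamma> * ln (a n j) * (-1) \<bar> \<le> \<delta> * (- ln (a n j))"
      if j: "j \<in> {k..n}" for j
    proof -
      have la: "ln (a n j) < 0" using lnaneg j .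
      have r: "\<bar>ln (b n j) / ln (a n j) - \<gamma>\<bar> < \<delta>" using n0 nn j by auto
      have "ln (b n j) - \<gamma> * ln (a n j) = (ln (b n j) / ln (a n j) - \<gamma>) * ln (a n j)"
        using la by (simp add: field_simps)
      hence "\<bar>ln (b n j) - \<gamma> * ln (a n j)\<bar> = \<bar>ln (b n j) / ln (a n j) - \<gamma>\<bar> * (- ln (a n j))"
        using la by (simp add: abs_mult)
      also have "\<dots> \<le> \<delta> * (- ln (a n j))" using r la by (intro mult_right_mono) auto
      finally show ?thesis by simp
    qed
    have "\<bar>y + \<gamma> * t\<bar> = \<bar>\<Sum>j=k..n. (ln (b n j) + \<gamma> * ln (a n j) * (-1))\<bar>"
      unfolding y_def t_def by (simp add: sum.distrib sum_distrib_left sum_negf sum_subtractf)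
    also have "\<dots> \<le> (\<Sum>j=k..n. \<bar>ln (b n j) + \<gamma> * ln (a n j) * (-1)\<bar>)" by (rule sum_abs)
    also have "\<dots> \<le> (\<Sum>j=k..n. \<delta> * (- ln (a n j)))" using each by (intro sum_mono) auto
    also have "\<dots> = \<delta> * t" unfolding t_def by (simp add: sum_distrib_left sum_negf)
    finally have yb: "\<bar>y + \<gamma> * t\<bar> \<le> \<delta> * t" .
    have dg: "\<delta> \<le> \<gamma>/2" by (simp add: \<delta>_def)
    have de: "\<delta> \<le> \<epsilon> * \<gamma> / 4" by (simp add: \<delta>_def)
    have mx: "max (- \<gamma> * t) y \<le> - (\<gamma>/2) * t"
    proof -
      have "y \<le> - \<gamma> * t + \<delta> * t" using yb by linarith
      also have "\<delta> * t \<le> \<gamma>/2 * t" using dg t0 by (rule mult_right_mono)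
      finally have "y \<le> - (\<gamma>/2) * t" by simp
      moreover have "- \<gamma> * t \<le> - (\<gamma>/2) * t" using t0 assms(1) by simp
      ultimately show ?thesis by simp
    qed
    have "\<bar>(Aprod a k n) powr \<gamma> - Aprod b k n\<bar> = \<bar>exp (- \<gamma> * t) - exp y\<bar>" using Ag Bg by simp
    also have "\<dots> \<le> \<bar>- \<gamma> * t - y\<bar> * exp (max (- \<gamma> * t) y)" by (rule exp_diff_bound)
    also have "\<dots> \<le> (\<delta> * t) * exp (- (\<gamma>/2) * t)"
    proof (rule mult_mono)
      show "\<bar>- \<gamma> * t - y\<bar> \<le> \<delta> * t" using yb by linarith
      show "exp (max (- \<gamma> * t) y) \<le> exp (- (\<gamma>/2) * t)" using mx by simp
      show "0 \<le> \<delta> * t" using dpos t0 by simp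
    qed simp
    also have "\<dots> = \<delta> * (t * exp (- (\<gamma>/2) * t))" by simp
    also have "\<dots> \<le> \<delta> * (2/\<gamma>)" using t_exp_bound[OF assms(1) t0] dpos
      by (intro mult_left_mono) auto
    also have "\<dots> \<le> (\<epsilon> * \<gamma> / 4) * (2/\<gamma>)" using de assms(1) by (intro mult_right_mono) auto
    also have "\<dots> = \<epsilon>/2" using assms(1) by (simp add: field_simps)
    also have "\<dots> < \<epsilon>" using ep by simp
    finally show "\<bar>(Aprod a k n) powr \<gamma> - Aprod b k n\<bar> < \<epsilon>" .
  qed
qed

end
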